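(* For every tree $T$ of order $n\ge 2$, $\sigma_t(T)\le (n-2)\,\sigma(T)$. Equality holds if and only if $T$ is the path $P_n$. Equivalently, if $\Delta(T)\ge 3$ then $\sigma_t(T)<(n-2)\sigma(T)$.
   Context: For a graph $G=(V,E)$ with vertex degrees $d(\cdot)$: $\sigma(G)=\sum_{uv\in E}(d(u)-d(v))^2$ (sum over edges) and $\sigma_t(G)=\sum_{\{u,v\}\subseteq V}(d(u)-d(v))^2$ (sum over all unordered pairs of distinct vertices). $\Delta(T)$ is the maximum degree and $P_n$ is the path on $n$ vertices. *)

theory Defs
  imports Main
begin

definition simple_graph :: "'a set \<Rightarrow> 'a set set \<Rightarrow> bool" where
  "simple_graph V E \<longleftrightarrow> finite V \<and> (\<forall>e\<in>E. e \<subseteq> V \<and> card e = 2)"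

definition degree :: "'a set set \<Rightarrow> 'a \<Rightarrow> nat" where
  "degree E v = card {e \<in> E. v \<in> e}"

definition is_walk :: "'a set \<Rightarrow> 'a set set \<Rightarrow> 'a list \<Rightarrow> bool" where
  "is_walk V E xs \<longleftrightarrow> xs \<noteq> [] \<and> set xs \<subseteq> V \<and>
     (\<forall>i. Suc i < length xs \<longrightarrow> {xs ! i, xs ! Suc i} \<in> E)"

definition connected_graph :: "'a set \<Rightarrow> 'a set set \<Rightarrow> bool" where
  "connected_graph V E \<longleftrightarrow> V \<noteq> {} \<and>
     (\<forall>u\<in>V. \<forall>v\<in>V. \<exists>xs. is_walk V E xs \<and> hd xs = u \<and> last xs = v)"

definition is_cycle :: "'a set \<Rightarrow> 'a set set \<Rightarrow> 'a list \<Rightarrow> bool" where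
  "is_cycle V E xs \<longleftrightarrow> length xs \<ge> 3 \<and> distinct xs \<and> is_walk V E xs \<and>
     {last xs, hd xs} \<in> E"

definition is_tree :: "'a set \<Rightarrow> 'a set set \<Rightarrow> bool" where
  "is_tree V E \<longleftrightarrow> simple_graph V E \<and> connected_graph V E \<and> (\<nexists>xs. is_cycle V E xs)"

definition is_path_graph :: "'a set \<Rightarrow> 'a set set \<Rightarrow> bool" where
  "is_path_graph V E \<longleftrightarrow> (\<exists>f. bij_betw f {0..<card V} V \<and>
     E = {{f i, f (Suc i)} | i. Suc i < card V})"

definition max_degree :: "'a set \<Rightarrow> 'a set set \<Rightarrow> nat" where
  "max_degree V E = Max (degree E ` V)"

definition sigma :: "'a set set \<Rightarrow> int" where
  "sigma E = (\<Sum>e\<in>E. (THE s. \<exists>u v. e = {u, v} \<and> s = (int (degree E u) - int (degree E v))^2))"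

definition sigma_t :: "'a set \<Rightarrow> 'a set set \<Rightarrow> int" where
  "sigma_t V E = (\<Sum>p\<in>{p. p \<subseteq> V \<and> card p = 2}.
      (THE s. \<exists>u v. p = {u, v} \<and> s = (int (degree E u) - int (degree E v))^2))"

end

theory Submission
  imports Defs
begin


fun wk :: "'a set set \<Rightarrow> 'a list \<Rightarrow> bool" where
  "wk E [] = True"
| "wk E [x] = True"
| "wk E (x # y # xs) = ({x, y} \<in> E \<and> wk E (y # xs))"

lemma wk_nth: "wk E xs \<longleftrightarrow> (\<forall>i. Suc i < length xs \<longrightarrow> {xs ! i, xs ! Suc i} \<in> E)"
proof (induction E xs rule: wk.induct)
  case (3 E x y xs)
  have "(\<forall>i. Suc i < length (x # y # xs) \<longrightarrow> {(x # y # xs) ! i, (x # y # xs) ! Suc i} \<in> E)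
    \<longleftrightarrow> {x, y} \<in> E \<and> (\<forall>i. Suc i < length (y # xs) \<longrightarrow> {(y # xs) ! i, (y # xs) ! Suc i} \<in> E)"
    (is "?L \<longleftrightarrow> ?R")
  proof
    assume ?L
    then show ?R by (metis Suc_less_eq length_Cons nth_Cons_Suc nth_Cons_0 zero_less_Suc)
  next
    assume ?R
    then show ?L by (metis (no_types, lifting) Suc_less_eq length_Cons nth_Cons_0 nth_Cons_Suc old.nat.exhaust)
  qed
  then show ?case using 3 by simp
qed auto

lemma is_walk_wk: "is_walk V E xs \<longleftrightarrow> xs \<noteq> [] \<and> set xs \<subseteq> V \<and> wk E xs"
  unfolding is_walk_def wk_nth by simp

lemma wk_avoid:
  assumes "wk E xs" "xs \<noteq> []" "hd xs \<noteq> l" "last xs \<noteq> l" "\<forall>e\<in>E. l \<in> e \<longrightarrow> e = {l, u}" "u \<noteq> l"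
  shows "\<exists>ys. ys \<noteq> [] \<and> wk (E - {{l, u}}) ys \<and> hd ys = hd xs \<and> last ys = last xs \<and> set ys \<subseteq> set xs - {l}"
  using assms
proof (induction "length xs" arbitrary: xs rule: less_induct)
  case less
  show ?case
  proof (cases xs)
    case Nil then show ?thesis using less by simp
  next
    case (Cons x rest)
    show ?thesis
    proof (cases rest)
      case Nil
      then show ?thesis using less Cons by (intro exI[of _ "[x]"]) auto
    next
      case (Cons y rest')
      note xs = \<open>xs = x # rest\<close> Cons
      have xl: "x \<noteq> l" using less xs by simp
      have exy: "{x, y} \<in> E" using less xs by simp
      show ?thesis
      proof (cases "y = l")
        case False
        have "\<exists>ys. ys \<noteq> [] \<and> wk (E - {{l, u}}) ys \<and> hd ys = hd (y # rest') \<and> last ys = last (y # rest') \<and> set ys \<subseteq> set (y # rest') - {l}"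
          using less xs False by (intro less(1)) auto
        then obtain ys where ys: "ys \<noteq> []" "wk (E - {{l, u}}) ys" "hd ys = y" "last ys = last (y # rest')" "set ys \<subseteq> set (y # rest') - {l}"
          by auto
        then obtain ys' where ys': "ys = y # ys'" by (cases ys) auto
        have "{x, y} \<noteq> {l, u}" using xl False by (auto simp: doubleton_eq_iff)
        then have "wk (E - {{l, u}}) (x # ys)" using ys ys' exy by simp
        then show ?thesis using ys xs xl by (intro exI[of _ "x # ys"]) auto
      next
        case True
        have "x = u" using less(6) exy True xl by (auto simp: doubleton_eq_iff)
        have "rest' \<noteq> []" using less(5) xs True by auto
        then obtain w r where r: "rest' = w # r" by (cases rest') auto
        have "{l, w} \<in> E" using less(2) xs r True by simp
        then have "w = u" using less(6,7) by (auto simp: doubleton_eq_iff)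
        have "\<exists>ys. ys \<noteq> [] \<and> wk (E - {{l, u}}) ys \<and> hd ys = hd (w # r) \<and> last ys = last (w # r) \<and> set ys \<subseteq> set (w # r) - {l}"
          using less xs r True \<open>w = u\<close> \<open>x = u\<close> by (intro less(1)) auto
        then obtain ys where "ys \<noteq> []" "wk (E - {{l, u}}) ys" "hd ys = hd (w # r)" "last ys = last (w # r)" "set ys \<subseteq> set (w # r) - {l}" by blast
        then show ?thesis using xs r True \<open>w = u\<close> \<open>x = u\<close> by (intro exI[of _ ys]) auto
      qed
    qed
  qed
qed

lemma tree_remove_leaf:
  assumes T: "is_tree V E" and "l \<in> V" "u \<in> V" "u \<noteq> l" "{l, u} \<in> E"
    and lf: "\<forall>e\<in>E. l \<in> e \<longrightarrow> e = {l, u}"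
  shows "is_tree (V - {l}) (E - {{l, u}})"
proof -
  have sg: "simple_graph V E" and cn: "connected_graph V E" and nc: "\<nexists>xs. is_cycle V E xs"
    using T unfolding is_tree_def by auto
  have "simple_graph (V - {l}) (E - {{l, u}})"
    using sg lf unfolding simple_graph_def by blast
  moreover have "connected_graph (V - {l}) (E - {{l, u}})"
    unfolding connected_graph_def
  proof (intro conjI ballI)
    show "V - {l} \<noteq> {}" using assms by auto
    fix a b assume ab: "a \<in> V - {l}" "b \<in> V - {l}"
    then obtain xs where xs: "is_walk V E xs" "hd xs = a" "last xs = b"
      using cn unfolding connected_graph_def by auto
    then obtain ys where "ys \<noteq> [] \<and> wk (E - {{l, u}}) ys \<and> hd ys = hd xs \<and> last ys = last xs \<and> set ys \<subseteq> set xs - {l}"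
      using wk_avoid[of E xs l u] ab lf assms(4) unfolding is_walk_wk by auto
    then show "\<exists>xs. is_walk (V - {l}) (E - {{l, u}}) xs \<and> hd xs = a \<and> last xs = b"
      using xs unfolding is_walk_wk by (intro exI[of _ ys]) auto
  qed
  moreover have "\<nexists>xs. is_cycle (V - {l}) (E - {{l, u}}) xs"
  proof
    assume "\<exists>xs. is_cycle (V - {l}) (E - {{l, u}}) xs"
    then obtain xs where "is_cycle (V - {l}) (E - {{l, u}}) xs" by blast
    then have "is_cycle V E xs" unfolding is_cycle_def is_walk_def by auto
    then show False using nc by blast
  qed
  ultimately show ?thesis unfolding is_tree_def by blast
qed

lemma is_walk_rev: "is_walk V E xs \<Longrightarrow> is_walk V E (rev xs)"
  unfolding is_walk_def
proof (intro conjI allI impI)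
  fix i assume w: "xs \<noteq> [] \<and> set xs \<subseteq> V \<and> (\<forall>i. Suc i < length xs \<longrightarrow> {xs ! i, xs ! Suc i} \<in> E)"
    and i: "Suc i < length (rev xs)"
  define j where "j = length xs - Suc (Suc i)"
  have j1: "length xs - Suc i = Suc j" using i unfolding j_def by simp
  have "{xs ! j, xs ! Suc j} \<in> E" using w i unfolding j_def by auto
  then show "{rev xs ! i, rev xs ! Suc i} \<in> E"
    using i j1 unfolding j_def by (simp add: rev_nth insert_commute)
qed (auto)

lemma maxwalk_end:
  assumes T: "is_tree V E" and w: "is_walk V E xs" "distinct xs" "2 \<le> length xs"
    and mx: "\<forall>ys. is_walk V E ys \<and> distinct ys \<longrightarrow> length ys \<le> length xs"
  shows "\<forall>e\<in>E. hd xs \<in> e \<longrightarrow> e = {hd xs, xs ! 1}"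
proof (intro ballI impI)
  have sg: "simple_graph V E" and nc: "\<nexists>xs. is_cycle V E xs"
    using T unfolding is_tree_def by auto
  fix e assume e: "e \<in> E" "hd xs \<in> e"
  have "card e = 2" "e \<subseteq> V" using sg e unfolding simple_graph_def by auto
  then obtain p q where pq: "e = {p, q}" "p \<noteq> q" by (auto simp: card_2_iff)
  define a where "a = hd xs"
  have a0: "a = xs ! 0" using w unfolding a_def by (cases xs) auto
  obtain b where eb: "e = {a, b}" "b \<noteq> a" using pq e unfolding a_def by auto
  have bV: "b \<in> V" using \<open>e \<subseteq> V\<close> eb by auto
  show "e = {hd xs, xs ! 1}"
  proof (cases "b \<in> set xs")
    case False
    have "is_walk V E (b # xs)"
      using w bV e eb a0 unfolding is_walk_def
      by (auto simp: nth_Cons insert_commute split: nat.splits)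
    moreover have "distinct (b # xs)" using False w by simp
    ultimately have "length (b # xs) \<le> length xs" using mx by blast
    then show ?thesis by simp
  next
    case True
    then obtain j where j: "j < length xs" "xs ! j = b" by (auto simp: in_set_conv_nth)
    have "j \<noteq> 0" using j eb a0 by (metis)
    show ?thesis
    proof (cases "j = 1")
      case True then show ?thesis using j eb a_def by simp
    next
      case False
      define cs where "cs = take (Suc j) xs"
      have "is_cycle V E cs"
        unfolding is_cycle_def
      proof (intro conjI)
        show "3 \<le> length cs" using j \<open>j \<noteq> 0\<close> False unfolding cs_def by simp
        show "distinct cs" using w unfolding cs_def by simp
        show "is_walk V E cs" using w j unfolding cs_def is_walk_def
          by (auto dest: in_set_takeD)
        have "last cs = b" using j unfolding cs_def by (simp add: take_Suc_conv_app_nth)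
        moreover have "hd cs = a" using j a0 unfolding cs_def by (cases xs) auto
        ultimately show "{last cs, hd cs} \<in> E" using e eb by (simp add: insert_commute)
      qed
      then show ?thesis using nc by blast
    qed
  qed
qed

lemma maxwalk_leaf:
  assumes T: "is_tree V E" and w: "is_walk V E xs" "distinct xs" "2 \<le> length xs"
    and mx: "\<forall>ys. is_walk V E ys \<and> distinct ys \<longrightarrow> length ys \<le> length xs"
  shows "hd xs \<in> V \<and> xs ! 1 \<in> V \<and> xs ! 1 \<noteq> hd xs \<and> {hd xs, xs ! 1} \<in> E \<and> (\<forall>e\<in>E. hd xs \<in> e \<longrightarrow> e = {hd xs, xs ! 1})"
proof -
  have "Suc (Suc 0) \<le> length xs" using w(3) by simp
  then obtain a b r where xs: "xs = a # b # r" by (auto simp: Suc_le_length_iff)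
  have f1: "b \<noteq> a" using w(2) xs by auto
  have "Suc 0 < length xs" using xs by simp
  then have "{xs ! 0, xs ! Suc 0} \<in> E" using w(1) unfolding is_walk_def by blast
  then have f2: "{a, b} \<in> E" using xs by simp
  have f3: "a \<in> V" "b \<in> V" using w(1) xs unfolding is_walk_def by auto
  have hx: "hd xs = a" and x1: "xs ! 1 = b" using xs by auto
  have f4: "\<forall>e\<in>E. a \<in> e \<longrightarrow> e = {a, b}" using maxwalk_end[OF assms] unfolding hx x1 .
  show ?thesis unfolding hx x1 using f1 f2 f3 f4 by blast
qed

lemma tree_leaf:
  assumes T: "is_tree V E" and c: "2 \<le> card V" and z: "z \<in> V"
  shows "\<exists>l u. l \<in> V \<and> u \<in> V \<and> l \<noteq> z \<and> u \<noteq> l \<and> {l, u} \<in> E \<and> (\<forall>e\<in>E. l \<in> e \<longrightarrow> e = {l, u})"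
proof -
  have sg: "simple_graph V E" and cn: "connected_graph V E"
    using T unfolding is_tree_def by auto
  have fin: "finite V" using sg unfolding simple_graph_def by auto
  have "card (V - {z}) \<ge> 1" using c z fin by simp
  then have "V - {z} \<noteq> {}" by (metis card.empty not_one_le_zero)
  then obtain b where b: "b \<in> V" "b \<noteq> z" by blast
  obtain xs where xs: "is_walk V E xs" "hd xs = z" "last xs = b"
    using cn z b unfolding connected_graph_def by blast
  have "length xs \<noteq> 1"
  proof
    assume "length xs = 1"
    then obtain y where "xs = [y]" by (cases xs) auto
    then show False using xs b by simp
  qed
  moreover have "xs \<noteq> []" using xs unfolding is_walk_def by simp
  ultimately have L2: "2 \<le> length xs" by (cases xs) (auto simp: Suc_le_eq)
  then have e01: "{xs ! 0, xs ! 1} \<in> E" using xs unfolding is_walk_def by auto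
  then have "card {xs ! 0, xs ! 1} = 2" using sg unfolding simple_graph_def by auto
  then have ne: "xs ! 0 \<noteq> xs ! 1" by (cases "xs ! 0 = xs ! 1") auto
  define P where "P k \<longleftrightarrow> (\<exists>ys. is_walk V E ys \<and> distinct ys \<and> length ys = k)" for k
  have "is_walk V E [xs ! 0, xs ! 1]" using e01 xs L2 unfolding is_walk_def by (auto simp: nth_Cons split: nat.splits)
  then have P2: "P 2" unfolding P_def using ne by (intro exI[of _ "[xs ! 0, xs ! 1]"]) auto
  have bnd: "\<forall>k. P k \<longrightarrow> k \<le> card V"
  proof (intro allI impI)
    fix k assume "P k"
    then obtain ys where "is_walk V E ys" "distinct ys" "length ys = k" unfolding P_def by blast
    then have "set ys \<subseteq> V" "card (set ys) = k" unfolding is_walk_def by (auto simp: distinct_card)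
    then show "k \<le> card V" using card_mono[OF fin, of "set ys"] by simp
  qed
  obtain k0 where k0: "P k0" "\<forall>y. P y \<longrightarrow> y \<le> k0" using Nat.ex_has_greatest_nat[OF P2 bnd] by blast
  then obtain ys where ys: "is_walk V E ys" "distinct ys" "length ys = k0" unfolding P_def by blast
  have mx: "\<forall>zs. is_walk V E zs \<and> distinct zs \<longrightarrow> length zs \<le> length ys"
  proof (intro allI impI)
    fix zs assume "is_walk V E zs \<and> distinct zs"
    then have "P (length zs)" unfolding P_def by blast
    then show "length zs \<le> length ys" using k0(2) ys(3) by simp
  qed
  have k2: "2 \<le> length ys" using k0(2) P2 ys(3) by simp
  note A = maxwalk_leaf[OF T ys(1,2) k2 mx]
  have B: "hd (rev ys) \<in> V \<and> rev ys ! 1 \<in> V \<and> rev ys ! 1 \<noteq> hd (rev ys) \<and> {hd (rev ys), rev ys ! 1} \<in> E \<and> (\<forall>e\<in>E. hd (rev ys) \<in> e \<longrightarrow> e = {hd (rev ys), rev ys ! 1})"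
    using maxwalk_leaf[OF T is_walk_rev[OF ys(1)]] ys k2 mx by simp
  have ne: "ys \<noteq> []" using k2 by auto
  have i1: "0 < length ys" "length ys - 1 < length ys" "0 \<noteq> length ys - 1" using k2 by auto
  have "ys ! 0 \<noteq> ys ! (length ys - 1)" using nth_eq_iff_index_eq[OF ys(2) i1(1,2)] i1(3) by simp
  then have "hd ys \<noteq> last ys" using ne by (simp add: hd_conv_nth last_conv_nth)
  then have "hd ys \<noteq> z \<or> hd (rev ys) \<noteq> z" by (auto simp add: hd_rev)
  then show ?thesis using A B by blast
qed


definition rooted :: "'a set \<Rightarrow> 'a set set \<Rightarrow> 'a \<Rightarrow> ('a \<Rightarrow> 'a) \<Rightarrow> ('a \<Rightarrow> nat) \<Rightarrow> bool" where
  "rooted V E z par h \<longleftrightarrow> h z = 0 \<and> (\<forall>v\<in>V-{z}. par v \<in> V \<and> h v = Suc (h (par v)))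
     \<and> E = (\<lambda>v. {v, par v}) ` (V - {z})"

lemma tree_rooted:
  assumes "is_tree V E" "z \<in> V"
  shows "\<exists>par h. rooted V E z par h"
  using assms
proof (induction "card V" arbitrary: V E rule: less_induct)
  case less
  have sg: "simple_graph V E" using less(2) unfolding is_tree_def by auto
  have fin: "finite V" using sg unfolding simple_graph_def by auto
  show ?case
  proof (cases "2 \<le> card V")
    case False
    have "card V \<noteq> 0" using fin less(3) by auto
    then have "card V = 1" using False by simp
    then obtain a where "V = {a}" by (auto simp: card_1_singleton_iff)
    then have V: "V = {z}" using less(3) by simp
    have E: "E = {}"
    proof (rule ccontr)
      assume "E \<noteq> {}"
      then obtain e where "e \<in> E" by blast
      then have "e \<subseteq> {z}" "card e = 2" using sg V unfolding simple_graph_def by auto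
      moreover have "card e \<le> card {z}" using \<open>e \<subseteq> {z}\<close> by (intro card_mono) auto
      ultimately show False by simp
    qed
    have "rooted V E z (\<lambda>v. v) (\<lambda>v. 0)" unfolding rooted_def V E by simp
    then show ?thesis by blast
  next
    case True
    obtain l u where lu: "l \<in> V" "u \<in> V" "l \<noteq> z" "u \<noteq> l" "{l, u} \<in> E" "\<forall>e\<in>E. l \<in> e \<longrightarrow> e = {l, u}"
      using tree_leaf[OF less(2) True less(3)] by blast
    have T': "is_tree (V - {l}) (E - {{l, u}})"
      using tree_remove_leaf[OF less(2) lu(1,2,4,5,6)] .
    have "card (V - {l}) < card V" using fin lu(1) True by simp
    then obtain par h where r: "rooted (V - {l}) (E - {{l, u}}) z par h"
      using less(1)[OF _ T'] less(3) lu(3) by blast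
    define par' where "par' = par(l := u)"
    define h' where "h' = h(l := Suc (h u))"
    have "rooted V E z par' h'"
      unfolding rooted_def
    proof (intro conjI)
      show "h' z = 0" using r lu(3) unfolding rooted_def h'_def by simp
    next
      show "\<forall>v\<in>V - {z}. par' v \<in> V \<and> h' v = Suc (h' (par' v))"
      proof
      fix v assume v: "v \<in> V - {z}"
      show "par' v \<in> V \<and> h' v = Suc (h' (par' v))"
      proof (cases "v = l")
        case True
        then show ?thesis using lu unfolding par'_def h'_def by simp
      next
        case False
        then have "par v \<in> V - {l} \<and> h v = Suc (h (par v))" using r v unfolding rooted_def by auto
        then show ?thesis using False unfolding par'_def h'_def by auto
      qed
      qed
    next
      have E': "E - {{l, u}} = (\<lambda>v. {v, par v}) ` (V - {l} - {z})" using r unfolding rooted_def by auto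
      have "(\<lambda>v. {v, par' v}) ` (V - {l} - {z}) = (\<lambda>v. {v, par v}) ` (V - {l} - {z})"
        unfolding par'_def by (intro image_cong) auto
      moreover have "V - {z} = insert l (V - {l} - {z})" using lu by auto
      ultimately have "(\<lambda>v. {v, par' v}) ` (V - {z}) = insert {l, u} (E - {{l, u}})"
        using E' unfolding par'_def by simp
      also have "\<dots> = E" using lu(5) by auto
      finally show "E = (\<lambda>v. {v, par' v}) ` (V - {z})" by simp
    qed
    then show ?thesis by blast
  qed
qed



lemma rooted_E: "rooted V E z par h \<Longrightarrow> E = (\<lambda>v. {v, par v}) ` (V - {z})"
  unfolding rooted_def by blast

lemma rooted_hz: "rooted V E z par h \<Longrightarrow> h z = 0"
  unfolding rooted_def by blast

lemma rooted_par: "rooted V E z par h \<Longrightarrow> v \<in> V - {z} \<Longrightarrow> par v \<in> V"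
  unfolding rooted_def by blast

lemma rooted_h: "rooted V E z par h \<Longrightarrow> v \<in> V - {z} \<Longrightarrow> h v = Suc (h (par v))"
  unfolding rooted_def by blast

lemma rooted_par_neq: "rooted V E z par h \<Longrightarrow> v \<in> V - {z} \<Longrightarrow> par v \<noteq> v"
  using rooted_h by (metis n_not_Suc_n)

lemma rooted_inj: "rooted V E z par h \<Longrightarrow> inj_on (\<lambda>v. {v, par v}) (V - {z})"
proof (rule inj_onI)
  fix v w assume r: "rooted V E z par h" and v: "v \<in> V - {z}" and w: "w \<in> V - {z}" and eq: "{v, par v} = {w, par w}"
  show "v = w"
  proof (rule ccontr)
    assume "v \<noteq> w"
    then have "v = par w" "par v = w" using eq by (auto simp: doubleton_eq_iff)
    then have "h v = Suc (h w)" "h w = Suc (h v)" using rooted_h[OF r v] rooted_h[OF r w] by auto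
    then show False by simp
  qed
qed

lemma rooted_deg:
  assumes r: "rooted V E z par h" and fin: "finite V" and v: "v \<in> V"
  shows "degree E v = (if v = z then 0 else 1) + card {w \<in> V - {z}. par w = v}"
proof -
  have E: "E = (\<lambda>v. {v, par v}) ` (V - {z})" using rooted_E[OF r] .
  have "{e \<in> E. v \<in> e} = (\<lambda>w. {w, par w}) ` {w \<in> V - {z}. w = v \<or> par w = v}"
    unfolding E by auto
  moreover have "inj_on (\<lambda>w. {w, par w}) {w \<in> V - {z}. w = v \<or> par w = v}"
    using rooted_inj[OF r] by (rule inj_on_subset) auto
  ultimately have "degree E v = card {w \<in> V - {z}. w = v \<or> par w = v}"
    unfolding degree_def by (simp add: card_image)
  also have "{w \<in> V - {z}. w = v \<or> par w = v} = (if v = z then {} else {v}) \<union> {w \<in> V - {z}. par w = v}"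
    using v by auto
  also have "card \<dots> = card (if v = z then {} else {v}) + card {w \<in> V - {z}. par w = v}"
    using fin rooted_par_neq[OF r] v by (intro card_Un_disjoint) auto
  finally show ?thesis by simp
qed

lemma rooted_sum_par:
  fixes g :: "'a \<Rightarrow> int"
  assumes r: "rooted V E z par h" and fin: "finite V"
  shows "(\<Sum>w\<in>V - {z}. g (par w)) = (\<Sum>v\<in>V. int (card {w \<in> V - {z}. par w = v}) * g v)"
proof -
  have img: "par ` (V - {z}) \<subseteq> V" using rooted_par[OF r] by auto
  have "(\<Sum>w\<in>V - {z}. g (par w)) = (\<Sum>v\<in>V. \<Sum>w\<in>{w \<in> V - {z}. par w = v}. g (par w))"
    using sum.group[OF _ fin img, of "\<lambda>w. g (par w)"] fin by simp
  also have "\<dots> = (\<Sum>v\<in>V. \<Sum>w\<in>{w \<in> V - {z}. par w = v}. g v)"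
    by (intro sum.cong) auto
  also have "\<dots> = (\<Sum>v\<in>V. int (card {w \<in> V - {z}. par w = v}) * g v)"
    by simp
  finally show ?thesis .
qed

lemma the_pair:
  fixes g :: "'a \<Rightarrow> int"
  shows "(THE s. \<exists>u v. {a, b} = {u, v} \<and> s = (g u - g v)^2) = (g a - g b)^2"
proof (rule the_equality)
  show "\<exists>u v. {a, b} = {u, v} \<and> (g a - g b)^2 = (g u - g v)^2" by blast
next
  fix s assume "\<exists>u v. {a, b} = {u, v} \<and> s = (g u - g v)^2"
  then obtain u v where "{a, b} = {u, v}" "s = (g u - g v)^2" by blast
  then show "s = (g a - g b)^2" by (auto simp: doubleton_eq_iff power2_commute)
qed

lemma rooted_sigma:
  assumes r: "rooted V E z par h" and fin: "finite V"
  shows "sigma E = (\<Sum>w\<in>V - {z}. (int (degree E w) - int (degree E (par w)))^2)"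
proof -
  have E: "E = (\<lambda>v. {v, par v}) ` (V - {z})" using rooted_E[OF r] .
  define d where "d v = int (degree E v)" for v
  define F where "F e = (THE s. \<exists>u v. e = {u, v} \<and> s = (d u - d v)^2)" for e
  have "sigma E = sum F E" unfolding sigma_def F_def d_def by simp
  also have "\<dots> = sum F ((\<lambda>v. {v, par v}) ` (V - {z}))" using E by simp
  also have "\<dots> = (\<Sum>w\<in>V - {z}. F {w, par w})"
    using sum.reindex[OF rooted_inj[OF r], of F] by simp
  also have "\<dots> = (\<Sum>w\<in>V - {z}. (d w - d (par w))^2)"
    unfolding F_def by (simp add: the_pair)
  finally show ?thesis unfolding d_def .
qed



lemma rooted_ch:
  assumes r: "rooted V E z par h" and fin: "finite V" and v: "v \<in> V"
  shows "int (card {w \<in> V - {z}. par w = v}) = int (degree E v) - 1 + (if v = z then 1 else 0)"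
  using rooted_deg[OF r fin v] by simp

lemma rooted_degsum:
  assumes r: "rooted V E z par h" and fin: "finite V" and z: "z \<in> V"
  shows "(\<Sum>v\<in>V. int (degree E v)) = 2 * (int (card V) - 1)"
proof -
  have "(\<Sum>w\<in>V - {z}. (\<lambda>_. 1::int) (par w)) = (\<Sum>v\<in>V. int (card {w \<in> V - {z}. par w = v}) * 1)"
    by (rule rooted_sum_par[OF r fin])
  moreover have c: "0 < card V" using fin z by (auto simp: card_gt_0_iff)
  ultimately have A: "int (card V) - 1 = (\<Sum>v\<in>V. int (degree E v) - 1 + (if v = z then 1 else 0))"
    using fin z rooted_ch[OF r fin] by (simp add: of_nat_diff)
  also have "\<dots> = (\<Sum>v\<in>V. int (degree E v)) - int (card V) + 1"
    using fin z by (simp add: sum.distrib sum_subtractf)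
  finally show ?thesis by simp
qed

lemma rooted_key:
  assumes r: "rooted V E z par h" and fin: "finite V" and z: "z \<in> V"
  defines "x \<equiv> \<lambda>v. int (degree E v) - 2"
  shows "sigma E - (\<Sum>v\<in>V. (x v)^2) - 2 * x z = (\<Sum>w\<in>V - {z}. (x w - x (par w))^2 + (x w - x (par w)))"
proof -
  have s1: "(\<Sum>w\<in>V - {z}. (x w - x (par w))^2) = sigma E"
    unfolding rooted_sigma[OF r fin] x_def by simp
  have s2: "(\<Sum>w\<in>V - {z}. x w) = (\<Sum>v\<in>V. x v) - x z"
    using fin z by (simp add: sum_diff1)
  have s3: "(\<Sum>w\<in>V - {z}. x (par w)) = (\<Sum>v\<in>V. int (card {w \<in> V - {z}. par w = v}) * x v)"
    by (rule rooted_sum_par[OF r fin])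
  also have "\<dots> = (\<Sum>v\<in>V. (x v + 1 + (if v = z then 1 else 0)) * x v)"
    using rooted_ch[OF r fin] unfolding x_def by (intro sum.cong) auto
  also have "\<dots> = (\<Sum>v\<in>V. (x v)^2 + x v + (if v = z then x v else 0))"
    by (intro sum.cong) (auto simp: algebra_simps power2_eq_square)
  also have "\<dots> = (\<Sum>v\<in>V. (x v)^2) + (\<Sum>v\<in>V. x v) + x z"
    using fin z by (simp add: sum.distrib)
  finally have s3': "(\<Sum>w\<in>V - {z}. x (par w)) = (\<Sum>v\<in>V. (x v)^2) + (\<Sum>v\<in>V. x v) + x z" .
  have "(\<Sum>w\<in>V - {z}. (x w - x (par w))^2 + (x w - x (par w)))
      = (\<Sum>w\<in>V - {z}. (x w - x (par w))^2) + (\<Sum>w\<in>V - {z}. x w) - (\<Sum>w\<in>V - {z}. x (par w))"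
    by (simp add: sum.distrib sum_subtractf)
  then show ?thesis using s1 s2 s3' by simp
qed



lemma double_sum_sq:
  fixes x :: "'a \<Rightarrow> int"
  assumes fin: "finite V"
  shows "(\<Sum>u\<in>V. \<Sum>v\<in>V. (x u - x v)^2) = 2 * int (card V) * (\<Sum>v\<in>V. (x v)^2) - 2 * (\<Sum>v\<in>V. x v)^2"
proof -
  have e: "\<And>u v. (x u - x v)^2 = (x u)^2 + (x v)^2 - 2 * (x u * x v)"
    by (simp add: power2_diff algebra_simps)
  have a: "(\<Sum>u\<in>V. \<Sum>v\<in>V. (x u)^2) = int (card V) * (\<Sum>v\<in>V. (x v)^2)"
    by (simp add: sum_distrib_left)
  have b: "(\<Sum>u\<in>V. \<Sum>v\<in>V. (x v)^2) = int (card V) * (\<Sum>v\<in>V. (x v)^2)"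
    by simp
  have c: "(\<Sum>u\<in>V. \<Sum>v\<in>V. 2 * (x u * x v)) = 2 * (\<Sum>v\<in>V. x v)^2"
    by (simp add: sum_distrib_left[symmetric] sum_product power2_eq_square)
  have "(\<Sum>u\<in>V. \<Sum>v\<in>V. (x u - x v)^2) = (\<Sum>u\<in>V. \<Sum>v\<in>V. (x u)^2 + (x v)^2 - 2 * (x u * x v))"
    unfolding e ..
  also have "\<dots> = (\<Sum>u\<in>V. \<Sum>v\<in>V. (x u)^2) + (\<Sum>u\<in>V. \<Sum>v\<in>V. (x v)^2) - (\<Sum>u\<in>V. \<Sum>v\<in>V. 2 * (x u * x v))"
    by (simp only: sum.distrib sum_subtractf)
  finally show ?thesis unfolding a b c by simp
qed

lemma sigma_t_formula:
  fixes V :: "'a set" and E :: "'a set set"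
  assumes fin: "finite V"
  defines "x \<equiv> \<lambda>v. int (degree E v) - 2"
  shows "sigma_t V E = int (card V) * (\<Sum>v\<in>V. (x v)^2) - (\<Sum>v\<in>V. x v)^2"
proof -
  define g where "g v = int (degree E v)" for v
  define P where "P = {p. p \<subseteq> V \<and> card p = 2}"
  define G where "G p = (THE s. \<exists>u v. p = {u, v} \<and> s = (g u - g v)^2)" for p
  define A where "A = {q \<in> V \<times> V. fst q \<noteq> snd q}"
  define F where "F q = (g (fst q) - g (snd q))^2" for q
  have st: "sigma_t V E = sum G P" unfolding sigma_t_def P_def G_def g_def by (rule refl)
  have "P \<subseteq> Pow V" unfolding P_def by blast
  then have finP: "finite P" using fin finite_subset by blast
  have finA: "finite A" unfolding A_def using fin by simp
  have img: "(\<lambda>q. {fst q, snd q}) ` A \<subseteq> P" unfolding A_def P_def by auto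
  have "sum F A = (\<Sum>p\<in>P. \<Sum>q\<in>{q \<in> A. {fst q, snd q} = p}. F q)"
    using sum.group[OF finA finP img, of F] by simp
  also have "\<dots> = (\<Sum>p\<in>P. 2 * G p)"
  proof (rule sum.cong)
    fix p assume "p \<in> P"
    then obtain a b where p: "p = {a, b}" "a \<noteq> b" "a \<in> V" "b \<in> V" unfolding P_def by (auto simp: card_2_iff)
    have "{q \<in> A. {fst q, snd q} = p} = {(a, b), (b, a)}"
      using p(2,3,4) unfolding A_def p(1) by (auto simp: doubleton_eq_iff)
    then have "(\<Sum>q\<in>{q \<in> A. {fst q, snd q} = p}. F q) = F (a, b) + F (b, a)"
      using p(2) by simp
    also have "\<dots> = 2 * (g a - g b)^2" unfolding F_def by (simp add: power2_commute)
    also have "\<dots> = 2 * G p" unfolding G_def p(1) by (simp add: the_pair)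
    finally show "(\<Sum>q\<in>{q \<in> A. {fst q, snd q} = p}. F q) = 2 * G p" .
  qed simp
  finally have a1: "sum F A = 2 * sum G P" by (simp add: sum_distrib_left)
  have "sum F A = sum F (V \<times> V)"
    unfolding A_def using fin by (intro sum.mono_neutral_left) (auto simp: F_def)
  also have "\<dots> = (\<Sum>(u, v)\<in>V \<times> V. (x u - x v)^2)"
    by (intro sum.cong) (auto simp: F_def g_def x_def)
  also have "\<dots> = (\<Sum>u\<in>V. \<Sum>v\<in>V. (x u - x v)^2)"
    by (simp add: sum.cartesian_product)
  also have "\<dots> = 2 * int (card V) * (\<Sum>v\<in>V. (x v)^2) - 2 * (\<Sum>v\<in>V. x v)^2"
    by (rule double_sum_sq[OF fin])
  finally show ?thesis using a1 st by simp
qed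



lemma alg_identity:
  fixes x :: "'a \<Rightarrow> int" and s :: int
  assumes fin: "finite V" and sx: "(\<Sum>v\<in>V. x v) = -2"
  shows "(\<Sum>v\<in>V. (x v + 1) * (s - (\<Sum>u\<in>V. (x u)^2) - 2 * x v))
       = (int (card V) - 2) * s - (int (card V) * (\<Sum>u\<in>V. (x u)^2) - 4)"
proof -
  define S where "S = (\<Sum>u\<in>V. (x u)^2)"
  define D where "D = s - S"
  have "(\<Sum>v\<in>V. (x v + 1) * (D - 2 * x v)) = (\<Sum>v\<in>V. D * x v + D - 2 * (x v)^2 - 2 * x v)"
    by (intro sum.cong) (auto simp: algebra_simps power2_eq_square)
  also have "\<dots> = D * (\<Sum>v\<in>V. x v) + D * int (card V) - 2 * S - 2 * (\<Sum>v\<in>V. x v)"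
    unfolding S_def by (simp add: sum.distrib sum_subtractf sum_distrib_left)
  also have "\<dots> = (int (card V) - 2) * s - (int (card V) * S - 4)"
    unfolding sx D_def by (simp add: algebra_simps)
  finally show ?thesis unfolding S_def D_def .
qed

lemma t_nonneg: "(0::int) \<le> d^2 + d"
proof -
  have "d^2 + d = d * (d + 1)" by (simp add: power2_eq_square algebra_simps)
  also have "\<dots> \<ge> 0" by (cases "d \<ge> 0") (auto simp: mult_nonneg_nonneg mult_nonpos_nonpos)
  finally show ?thesis .
qed

lemma t_zero: "(d::int)^2 + d = 0 \<Longrightarrow> d = 0 \<or> d = -1"
proof -
  assume "d^2 + d = 0"
  then have "d * (d + 1) = 0" by (simp add: power2_eq_square algebra_simps)
  then show ?thesis by auto
qed

lemma rooted_D_ge: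
  assumes r: "rooted V E z par h" and fin: "finite V" and z: "z \<in> V"
  defines "x \<equiv> \<lambda>v. int (degree E v) - 2"
  shows "2 * x z \<le> sigma E - (\<Sum>v\<in>V. (x v)^2)"
proof -
  have "0 \<le> (\<Sum>w\<in>V - {z}. (x w - x (par w))^2 + (x w - x (par w)))"
    by (intro sum_nonneg t_nonneg)
  then show ?thesis using rooted_key[OF r fin z] unfolding x_def by simp
qed

lemma rooted_deg_par_ge2:
  assumes r: "rooted V E z par h" and fin: "finite V" and w: "w \<in> V - {z}" and p: "par w \<noteq> z"
  shows "2 \<le> degree E (par w)"
proof -
  have pV: "par w \<in> V" using rooted_par[OF r w] .
  have "w \<in> {u \<in> V - {z}. par u = par w}" using w by simp
  then have "card {u \<in> V - {z}. par u = par w} \<noteq> 0" using fin by auto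
  then show ?thesis using rooted_deg[OF r fin pV] p by simp
qed



lemma path_deg_le2:
  assumes p: "is_path_graph V E" and v: "v \<in> V"
  shows "degree E v \<le> 2"
proof -
  obtain f where bij: "bij_betw f {0..<card V} V" and E: "E = {{f i, f (Suc i)} | i. Suc i < card V}"
    using p unfolding is_path_graph_def by blast
  have inj: "inj_on f {0..<card V}" and img: "f ` {0..<card V} = V" using bij by (auto simp: bij_betw_def)
  have "v \<in> f ` {0..<card V}" using v img by simp
  then obtain k where k: "k < card V" "v = f k" by auto
  have sub: "{e \<in> E. v \<in> e} \<subseteq> {{f (k - 1), f k}, {f k, f (Suc k)}}"
  proof
    fix e assume "e \<in> {e \<in> E. v \<in> e}"
    then obtain i where i: "Suc i < card V" "e = {f i, f (Suc i)}" "v \<in> e" using E by blast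
    then have "f k = f i \<or> f k = f (Suc i)" using k by auto
    then have "k = i \<or> k = Suc i" using inj k(1) i(1) by (auto dest: inj_onD)
    then show "e \<in> {{f (k - 1), f k}, {f k, f (Suc k)}}" using i by auto
  qed
  have "card {e \<in> E. v \<in> e} \<le> card {{f (k - 1), f k}, {f k, f (Suc k)}}"
    by (rule card_mono[OF _ sub]) simp
  also have "\<dots> \<le> 2" by (cases "{f (k - 1), f k} = {f k, f (Suc k)}") auto
  finally show ?thesis unfolding degree_def .
qed

lemma deg2_path:
  assumes fin: "finite V" and d2: "\<forall>v\<in>V. degree E v \<le> 2" and z: "z \<in> V" and dz: "degree E z = 1"
    and r: "rooted V E z par h"
  shows "is_path_graph V E"
proof -
  have ch: "card {w \<in> V - {z}. par w = v} \<le> 1" if v: "v \<in> V" for v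
    using rooted_deg[OF r fin v] d2 v dz by (cases "v = z") auto
  have hz: "h z = 0" using rooted_hz[OF r] .
  have hinj: "\<forall>u\<in>V. \<forall>v\<in>V. h u = k \<longrightarrow> h v = k \<longrightarrow> u = v" for k
  proof (induction k)
    case 0
    have "u = z" if "u \<in> V" "h u = 0" for u
      using rooted_h[OF r, of u] that by (cases "u = z") auto
    then show ?case by metis
  next
    case (Suc k)
    show ?case
    proof (intro ballI impI)
      fix u v assume uv: "u \<in> V" "v \<in> V" "h u = Suc k" "h v = Suc k"
      then have u': "u \<in> V - {z}" and v': "v \<in> V - {z}" using hz by auto
      have "h (par u) = k" "h (par v) = k" using rooted_h[OF r u'] rooted_h[OF r v'] uv by auto
      then have pe: "par u = par v" using Suc rooted_par[OF r u'] rooted_par[OF r v'] by blast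
      show "u = v"
      proof (rule ccontr)
        assume "u \<noteq> v"
        have "{u, v} \<subseteq> {w \<in> V - {z}. par w = par u}" using u' v' pe by auto
        then have "card {u, v} \<le> card {w \<in> V - {z}. par w = par u}" using fin by (intro card_mono) auto
        then show False using ch[OF rooted_par[OF r u']] \<open>u \<noteq> v\<close> by simp
      qed
    qed
  qed
  have inj: "inj_on h V" using hinj by (auto intro: inj_onI)
  have down: "\<forall>v\<in>V. h v = k \<longrightarrow> (\<forall>j\<le>k. j \<in> h ` V)" for k
  proof (induction k)
    case 0 then show ?case by auto
  next
    case (Suc k)
    show ?case
    proof (intro ballI impI allI)
      fix v j assume v: "v \<in> V" "h v = Suc k" "j \<le> Suc k"
      then have v': "v \<in> V - {z}" using hz by auto
      have "h (par v) = k" using rooted_h[OF r v'] v by simp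
      then have "\<forall>j\<le>k. j \<in> h ` V" using Suc rooted_par[OF r v'] by blast
      then show "j \<in> h ` V" using v by (cases "j = Suc k") (auto intro: image_eqI[of _ h v])
    qed
  qed
  have cardimg: "card (h ` V) = card V" using card_image[OF inj] .
  have sub: "h ` V \<subseteq> {0..<card V}"
  proof
    fix k assume k: "k \<in> h ` V"
    show "k \<in> {0..<card V}"
    proof (rule ccontr)
      assume "k \<notin> {0..<card V}"
      then have "card V \<le> k" by simp
      obtain v where "v \<in> V" "h v = k" using k by blast
      then have "{0..k} \<subseteq> h ` V" using down[of k] by auto
      then have "card {0..k} \<le> card (h ` V)" using fin by (intro card_mono) auto
      then show False using cardimg \<open>card V \<le> k\<close> by simp
    qed
  qed
  have himg: "h ` V = {0..<card V}"
    using sub cardimg by (intro card_subset_eq) auto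
  have bh: "bij_betw h V {0..<card V}" using inj himg by (simp add: bij_betw_def)
  define f where "f = inv_into V h"
  have bf: "bij_betw f {0..<card V} V" unfolding f_def by (rule bij_betw_inv_into[OF bh])
  have fh: "f (h v) = v" if "v \<in> V" for v unfolding f_def using inv_into_f_f[OF inj that] .
  have E: "E = (\<lambda>v. {v, par v}) ` (V - {z})" using rooted_E[OF r] .
  have "E = {{f i, f (Suc i)} | i. Suc i < card V}"
  proof
    show "E \<subseteq> {{f i, f (Suc i)} | i. Suc i < card V}"
    proof
      fix e assume "e \<in> E"
      then obtain w where w: "w \<in> V - {z}" "e = {w, par w}" using E by blast
      have pw: "par w \<in> V" using rooted_par[OF r w(1)] .
      have hw: "h w = Suc (h (par w))" using rooted_h[OF r w(1)] .
      have "h w < card V" using himg w by auto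
      moreover have "f (h (par w)) = par w" using fh pw by auto
      moreover have "f (Suc (h (par w))) = w" using fh[of w] w hw by simp
      ultimately show "e \<in> {{f i, f (Suc i)} | i. Suc i < card V}"
        using w hw by (auto simp: insert_commute intro!: exI[of _ "h (par w)"])
    qed
  next
    show "{{f i, f (Suc i)} | i. Suc i < card V} \<subseteq> E"
    proof
      fix e assume "e \<in> {{f i, f (Suc i)} | i. Suc i < card V}"
      then obtain i where i: "Suc i < card V" "e = {f i, f (Suc i)}" by blast
      define w where "w = f (Suc i)"
      have wV: "w \<in> V" using bf i(1) unfolding w_def by (auto simp: bij_betw_def)
      have hw: "h w = Suc i" using wV fh himg i(1) unfolding w_def
        by (metis atLeastLessThan_iff f_def f_inv_into_f le0)
      have w': "w \<in> V - {z}" using hw hz wV by auto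
      have "h (par w) = i" using rooted_h[OF r w'] hw by simp
      then have "f i = par w" using fh rooted_par[OF r w'] by metis
      then have "e = {w, par w}" using i unfolding w_def by (simp add: insert_commute)
      then show "e \<in> E" using E w' by blast
    qed
  qed
  then show ?thesis unfolding is_path_graph_def using bf by blast
qed



theorem theorem2:
  fixes V :: "'a set" and E :: "'a set set"
  assumes "is_tree V E" and "card V \<ge> 2"
  shows "sigma_t V E \<le> (int (card V) - 2) * sigma E
     \<and> (sigma_t V E = (int (card V) - 2) * sigma E \<longleftrightarrow> is_path_graph V E)
     \<and> (max_degree V E \<ge> 3 \<longrightarrow> sigma_t V E < (int (card V) - 2) * sigma E)"
proof -
  note T = assms(1) and c2 = assms(2)
  have sg: "simple_graph V E" using T unfolding is_tree_def by auto
  have fin: "finite V" using sg unfolding simple_graph_def by auto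
  have Vne: "V \<noteq> {}" using c2 by auto
  define x where "x v = int (degree E v) - 2" for v
  define S where "S = (\<Sum>v\<in>V. (x v)^2)"
  define D where "D = sigma E - S"
  define trm where "trm v = (x v + 1) * (D - 2 * x v)" for v
  have root: "\<exists>par h. rooted V E z par h" if "z \<in> V" for z using tree_rooted[OF T that] .
  obtain z0 where z0: "z0 \<in> V" using Vne by blast
  obtain par0 h0 where r0: "rooted V E z0 par0 h0" using root[OF z0] by blast
  have sx: "(\<Sum>v\<in>V. x v) = -2"
    using rooted_degsum[OF r0 fin z0] unfolding x_def by (simp add: sum_subtractf)
  have xge: "-1 \<le> x v" if v: "v \<in> V" for v
  proof -
    have "card (V - {v}) \<ge> 1" using c2 fin v by simp
    then have "V - {v} \<noteq> {}" by (metis card.empty not_one_le_zero)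
    then obtain z where z: "z \<in> V" "z \<noteq> v" by blast
    obtain par h where r: "rooted V E z par h" using root[OF z(1)] by blast
    show ?thesis using rooted_deg[OF r fin v] z unfolding x_def by simp
  qed
  have Dge: "2 * x v \<le> D" if v: "v \<in> V" for v
  proof -
    obtain par h where r: "rooted V E v par h" using root[OF v] by blast
    show ?thesis using rooted_D_ge[OF r fin v] unfolding D_def S_def x_def .
  qed
  have st: "sigma_t V E = int (card V) * S - 4"
    using sigma_t_formula[OF fin, of E] sx unfolding S_def x_def by simp
  have idt: "(\<Sum>v\<in>V. trm v) = (int (card V) - 2) * sigma E - sigma_t V E"
  proof -
    have "(\<Sum>v\<in>V. trm v) = (\<Sum>v\<in>V. (x v + 1) * (sigma E - (\<Sum>u\<in>V. (x u)^2) - 2 * x v))"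
      unfolding trm_def D_def S_def by simp
    then show ?thesis using alg_identity[OF fin sx, of "sigma E"] unfolding st S_def by simp
  qed
  have tnn: "0 \<le> trm v" if "v \<in> V" for v
    unfolding trm_def using xge[OF that] Dge[OF that] by simp
  have P1: "sigma_t V E \<le> (int (card V) - 2) * sigma E"
    using sum_nonneg[of V trm] tnn idt by simp
  have leaf: "\<exists>l\<in>V. x l = -1"
  proof (rule ccontr)
    assume "\<not> (\<exists>l\<in>V. x l = -1)"
    then have "\<forall>v\<in>V. 0 \<le> x v" using xge by force
    then have "0 \<le> (\<Sum>v\<in>V. x v)" by (intro sum_nonneg) auto
    then show False using sx by simp
  qed
  have P2: "sigma_t V E < (int (card V) - 2) * sigma E" if v0: "v0 \<in> V" "3 \<le> degree E v0" for v0
  proof -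
    have xv0: "1 \<le> x v0" using v0 unfolding x_def by simp
    obtain par h where r: "rooted V E v0 par h" using root[OF v0(1)] by blast
    define t where "t w = (x w - x (par w))^2 + (x w - x (par w))" for w
    have key: "D - 2 * x v0 = (\<Sum>w\<in>V - {v0}. t w)"
      using rooted_key[OF r fin v0(1)] unfolding D_def S_def x_def t_def .
    have tge: "0 \<le> t w" for w unfolding t_def by (rule t_nonneg)
    have "\<exists>p\<in>V. 0 < trm p"
    proof (cases "(\<Sum>w\<in>V - {v0}. t w) = 0")
      case False
      moreover have "0 \<le> (\<Sum>w\<in>V - {v0}. t w)" using tge by (intro sum_nonneg) auto
      ultimately have "0 < (\<Sum>w\<in>V - {v0}. t w)" by linarith
      then have "0 < D - 2 * x v0" using key by simp
      moreover have "0 < x v0 + 1" using xv0 by simp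
      ultimately have "0 < trm v0" unfolding trm_def by simp
      then show ?thesis using v0 by blast
    next
      case True
      then have t0: "\<forall>w\<in>V - {v0}. t w = 0" using sum_nonneg_eq_0_iff[of "V - {v0}" t] fin tge by auto
      obtain l where l: "l \<in> V" "x l = -1" using leaf by blast
      have l': "l \<in> V - {v0}" using l xv0 by auto
      have pV: "par l \<in> V" using rooted_par[OF r l'] .
      have "x l - x (par l) = 0 \<or> x l - x (par l) = -1" using t0 l' t_zero unfolding t_def by blast
      moreover have "0 \<le> x (par l)"
      proof (cases "par l = v0")
        case True then show ?thesis using xv0 by simp
      next
        case False
        then show ?thesis using rooted_deg_par_ge2[OF r fin l' False] unfolding x_def by simp
      qed
      ultimately have "x (par l) = 0" using l by auto
      then have "trm (par l) = D" unfolding trm_def by simp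
      moreover have "2 \<le> D" using Dge[OF v0(1)] xv0 by simp
      ultimately have "0 < trm (par l)" by simp
      then show ?thesis using pV by blast
    qed
    then obtain p where "p \<in> V" "0 < trm p" by blast
    then have "0 < (\<Sum>v\<in>V. trm v)" using fin tnn by (intro sum_pos2[of V p]) auto
    then show ?thesis using idt by simp
  qed
  have P3: "sigma_t V E = (int (card V) - 2) * sigma E" if d2: "\<forall>v\<in>V. degree E v \<le> 2"
  proof -
    have x01: "x v = -1 \<or> x v = 0" if "v \<in> V" for v using xge[OF that] d2 that unfolding x_def by force
    obtain z where z: "z \<in> V" "x z = -1" using leaf by blast
    obtain par h where r: "rooted V E z par h" using root[OF z(1)] by blast
    define t where "t w = (x w - x (par w))^2 + (x w - x (par w))" for w
    have key: "D - 2 * x z = (\<Sum>w\<in>V - {z}. t w)"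
      using rooted_key[OF r fin z(1)] unfolding D_def S_def x_def t_def .
    have tle: "t w \<le> (if par w = z then 2 else 0)" if w: "w \<in> V - {z}" for w
    proof -
      have pV: "par w \<in> V" using rooted_par[OF r w] .
      show ?thesis
      proof (cases "par w = z")
        case True
        then show ?thesis using x01[OF pV] x01[of w] w unfolding t_def by auto
      next
        case False
        then have "x (par w) = 0" using rooted_deg_par_ge2[OF r fin w False] x01[OF pV] unfolding x_def by auto
        then show ?thesis using x01[of w] w False unfolding t_def by auto
      qed
    qed
    have "(\<Sum>w\<in>V - {z}. t w) \<le> (\<Sum>w\<in>V - {z}. (\<lambda>v. if v = z then 2 else 0) (par w))"
      using tle by (intro sum_mono) auto
    also have "\<dots> = (\<Sum>v\<in>V. int (card {w \<in> V - {z}. par w = v}) * (if v = z then 2 else 0))"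
      by (rule rooted_sum_par[OF r fin])
    also have "\<dots> = (\<Sum>v\<in>V. if v = z then int (card {w \<in> V - {z}. par w = v}) * 2 else 0)"
      by (intro sum.cong) auto
    also have "\<dots> = int (card {w \<in> V - {z}. par w = z}) * 2"
      using fin z(1) by (simp add: sum.delta)
    also have "\<dots> = 2"
      using rooted_ch[OF r fin z(1)] z(2) unfolding x_def by simp
    finally have "D \<le> 0" using key z(2) by simp
    then have "trm v \<le> 0" if "v \<in> V" for v
      using x01[OF that] unfolding trm_def by auto
    then have "(\<Sum>v\<in>V. trm v) \<le> 0" by (intro sum_nonpos) auto
    then show ?thesis using P1 idt by simp
  qed
  have md: "3 \<le> max_degree V E \<longleftrightarrow> (\<exists>v\<in>V. 3 \<le> degree E v)"
    unfolding max_degree_def using fin Vne by (simp add: Max_ge_iff)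
  have iff: "sigma_t V E = (int (card V) - 2) * sigma E \<longleftrightarrow> is_path_graph V E"
  proof
    assume eq: "sigma_t V E = (int (card V) - 2) * sigma E"
    have d2: "\<forall>v\<in>V. degree E v \<le> 2"
    proof (rule ccontr)
      assume "\<not> (\<forall>v\<in>V. degree E v \<le> 2)"
      then obtain v where v: "v \<in> V" "3 \<le> degree E v" by force
      have "sigma_t V E < (int (card V) - 2) * sigma E" using P2[OF v] .
      then show False using eq by simp
    qed
    obtain z where z: "z \<in> V" "x z = -1" using leaf by blast
    obtain par h where r: "rooted V E z par h" using root[OF z(1)] by blast
    have dz: "degree E z = 1" using z(2) unfolding x_def by simp
    show "is_path_graph V E" using deg2_path[OF fin d2 z(1) dz r] .
  next
    assume "is_path_graph V E"
    then have "\<forall>v\<in>V. degree E v \<le> 2" using path_deg_le2 by metis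
    then show "sigma_t V E = (int (card V) - 2) * sigma E" by (rule P3)
  qed
  have P2': "3 \<le> max_degree V E \<longrightarrow> sigma_t V E < (int (card V) - 2) * sigma E"
  proof
    assume "3 \<le> max_degree V E"
    then obtain v where "v \<in> V" "3 \<le> degree E v" using md by blast
    then show "sigma_t V E < (int (card V) - 2) * sigma E" by (rule P2)
  qed
  show ?thesis by (rule conjI[OF P1 conjI[OF iff P2']])
qed

end
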